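(* Let $P$ be a program over a propositional signature $\Sigma$ and $q\in\Sigma$. Then for every program $R$ over $\Sigma\setminus\{q\}$, $\{Y\setminus\{q\}: Y\in AS(P\cup R)\}\subseteq AS(f_{SP}(P,q)\cup R)$.
   Context: A program over $\Sigma$ is a finite set of rules $r$ of the form $a_1\vee\dots\vee a_k\leftarrow b_1,\dots,b_l,\ not\,c_1,\dots,not\,c_m,\ not\,not\,d_1,\dots,not\,not\,d_n$ with atoms in $\Sigma$; write $H(r)=\{a_i\}$, $B^+(r)=\{b_i\}$, $B^-(r)=\{c_i\}$, $B^{--}(r)=\{d_i\}$, $B(r)=B^+(r)\cup\{not\,c: c\in B^-(r)\}\cup\{not\,not\,d:d\in B^{--}(r)\}$ (elements of $B(r)$ are literals); a rule is written $H(r)\leftarrow B(r)$. $\Sigma(r)$, $\Sigma(P)$ are the atoms occurring in $r$, $P$. Reduct: $P^I=\{H(r)\leftarrow B^+(r): r\in P, B^-(r)\cap I=\emptyset, B^{--}(r)\subseteq I\}$. $I$ classically satisfies $r$ if $B^+(r)\subseteq I$, $B^-(r)\cap I=\emptyset$, $B^{--}(r)\subseteq I$ imply $H(r)\cap I\ne\emptyset$. An HT-interpretation $\langle X,Y\rangle$ ($X\subseteq Y$) is an HT-model of $P$ if $Y$ classically satisfies all rules of $P$ and $X$ all rules of $P^Y$; $\mathcal{HT}(P)$ is the set of HT-models with $X,Y\subseteq\Sigma(P)$. $Y$ is an answer set of $P$ if $\langle Y,Y\rangle\in\mathcal{HT}(P)$ and no $X\subsetneq Y$ has $\langle X,Y\rangle\in\mathcal{HT}(P)$;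 $AS(P)$ is the set of answer sets. Normal form: $r$ is tautological if $H(r)\cap B^+(r)\ne\emptyset$ or $B^+(r)\cap B^-(r)\ne\emptyset$ or $B^-(r)\cap B^{--}(r)\ne\emptyset$; $r\in P$ is minimal in $P$ if no $r'\in P$ has ($H(r')\subseteq H(r)$ and $B(r')\subsetneq B(r)$) or ($H(r')\subsetneq H(r)$ and $B(r')\subseteq B(r)$). $NF(P)$ is obtained by: 1. removing tautological rules; 2. removing from $B^{--}(r)$ atoms in $B^+(r)$; 3. removing from $H(r)$ atoms in $B^-(r)$; 4. removing rules not minimal in the resulting program. Notation: for a set $S$ of literals, $not\,(S)=\{not\,s:s\in S\}$, $not\,not\,(S)=\{not\,not\,s:s\in S\}$, simplifying $not\,not\,not\,p=not\,p$ and $not\,not\,not\,not\,p=not\,not\,p$. $B^{\setminus q}(r)=B(r)\setminus\{q,not\,q,not\,not\,q\}$, $H^{\setminus q}(r)=H(r)\setminus\{q\}$. For a set of rules $Q$, $D_q(Q)$ is the set of all sets $not\,(\{l_1,\dots,l_m\})\cup not\,not\,(\{l_{m+1},\dots,l_n\})$ where $\langle\{r_1,\dots,r_m\},\{r_{m+1},\dots,r_n\}\rangle$ is a partition of $Q$ (parts possibly empty), $l_i\in B^{\setminus q}(r_i)$ for $i\le m$, $l_j\in H^{\setminus q}(r_j)$ for $j>m$ (so $D_q(\emptyset)=\{\emptyset\}$). The operator $f_{SP}$: let $P'=NF(P)$, $R=\{r\in P': q\notin\Sigma(r)\}$, $R_0=\{r\in P':q\in B(r)\}$, $R_1=\{r\in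 P': not\,q\in B(r)\}$, $R_2=\{r\in P': not\,not\,q\in B(r), q\notin H(r)\}$, $R_3=\{r\in P': not\,not\,q\in B(r), q\in H(r)\}$, $R_4=\{r\in P': not\,not\,q\notin B(r), q\in H(r)\}$. $P''$ consists of: every $r\in R$; and (1a) for $r_0\in R_0$, $r_4\in R_4$: $H(r_0)\cup H^{\setminus q}(r_4)\leftarrow B^{\setminus q}(r_0)\cup B(r_4)$; (2a) for $r_0\in R_0$, $r_3\in R_3$, $r'\in R_1\cup R_4$: $H(r_0)\cup H^{\setminus q}(r_3)\leftarrow B^{\setminus q}(r_0)\cup B^{\setminus q}(r_3)\cup not\,(H^{\setminus q}(r'))\cup not\,not\,(B^{\setminus q}(r'))$; (3a) for $r_0\in R_0$, $r_3\in R_3$, $h\in H(r_0)$, $D\in D_q((R_0\cup R_2)\setminus\{r_0\})$: $H(r_0)\leftarrow B^{\setminus q}(r_0)\cup\{not\,not\,h\}\cup D\cup B^{\setminus q}(r_3)\cup not\,(H^{\setminus q}(r_3))$; (1b) for $r_2\in R_2$, $r_4\in R_4$: $H(r_2)\leftarrow B^{\setminus q}(r_2)\cup not\,(H^{\setminus q}(r_4))\cup not\,not\,(B(r_4))$; (2b) for $r_2\in R_2$, $r_3\in R_3$, $r'\in R_1\cup R_4$: $H(r_2)\leftarrow B^{\setminus q}(r_2)\cup not\,(H^{\setminus q}(r_3)\cup H^{\setminus q}(r'))\cup not\,not\,(B^{\setminus q}(r_3)\cup B^{\setminus q}(r'))$; (3b) for $r_2\in R_2$, $r_3\in R_3$,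 $h\in H(r_2)$, $D\in D_q((R_0\cup R_2)\setminus\{r_2\})$: $H(r_2)\leftarrow B^{\setminus q}(r_2)\cup not\,(H^{\setminus q}(r_3))\cup not\,not\,(B^{\setminus q}(r_3)\cup\{h\})\cup D$; (4) for $r'\in R_1\cup R_4$, $D\in D_q(R_3\cup R_4)$ with $D\cap not\,(B^{\setminus q}(r'))=\emptyset$: $H^{\setminus q}(r')\leftarrow B^{\setminus q}(r')\cup D$; (5) for $r'\in R_1\cup R_4$, $r_3\in R_3$, $r\in R_0\cup R_2$, $D\in D_q(R_4)$ with $D\cap not\,(B^{\setminus q}(r'))=\emptyset$: $H^{\setminus q}(r')\leftarrow B^{\setminus q}(r')\cup not\,(H(r)\cup H^{\setminus q}(r_3))\cup not\,not\,(B^{\setminus q}(r)\cup B^{\setminus q}(r_3))\cup D$; (6) for $r'\in R_1\cup R_4$, $r_3\in R_3$, $h\in H^{\setminus q}(r')$, $D\in D_q((R_1\cup R_4)\setminus\{r'\})$: $H^{\setminus q}(r')\leftarrow B^{\setminus q}(r')\cup not\,(H^{\setminus q}(r_3))\cup not\,not\,(B^{\setminus q}(r_3)\cup\{h\})\cup D$; (7) for $r_0\in R_0$, $r_3,r_3'\in R_3$ with $r_3\ne r_3'$, $D\in D_q((R_0\cup R_2)\setminus\{r_0\})$, $h\in H(r_0)$: $H(r_0)\cup H^{\setminus q}(r_3)\leftarrow B^{\setminus q}(r_0)\cup B^{\setminus q}(r_3)\cup not\,(H^{\setminus q}(r_3'))\cup not\,not\,(B^{\setminus q}(r_3')\cup\{h\})\cup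 D$. Then $f_{SP}(P,q)=NF(P'')$. *)

theory Defs
  imports Main
begin

datatype 'a lit = Pos 'a | Neg 'a | NegNeg 'a

text \<open>A rule  H <- B+, not B-, not not B--  is given by its four atom sets.\<close>
record 'a rule =
  hd  :: "'a set"
  bp  :: "'a set"
  bm  :: "'a set"
  bmm :: "'a set"

definition finite_rule :: "'a rule \<Rightarrow> bool" where
  "finite_rule r \<longleftrightarrow> finite (hd r) \<and> finite (bp r) \<and> finite (bm r) \<and> finite (bmm r)"

definition body :: "'a rule \<Rightarrow> 'a lit set" where
  "body r = Pos ` bp r \<union> Neg ` bm r \<union> NegNeg ` bmm r"

definition mk_rule :: "'a set \<Rightarrow> 'a lit set \<Rightarrow> 'a rule" where
  "mk_rule H L = \<lparr>hd = H, bp = {a. Pos a \<in> L}, bm = {a. Neg a \<in> L}, bmm = {a. NegNeg a \<in> L}\<rparr>"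

definition atoms_rule :: "'a rule \<Rightarrow> 'a set" where
  "atoms_rule r = hd r \<union> bp r \<union> bm r \<union> bmm r"

definition atoms :: "'a rule set \<Rightarrow> 'a set" where
  "atoms P = (\<Union>r\<in>P. atoms_rule r)"

definition sat_rule :: "'a set \<Rightarrow> 'a rule \<Rightarrow> bool" where
  "sat_rule I r \<longleftrightarrow> (bp r \<subseteq> I \<and> bm r \<inter> I = {} \<and> bmm r \<subseteq> I \<longrightarrow> hd r \<inter> I \<noteq> {})"

definition sat :: "'a set \<Rightarrow> 'a rule set \<Rightarrow> bool" where
  "sat I P \<longleftrightarrow> (\<forall>r\<in>P. sat_rule I r)"

definition reduct :: "'a rule set \<Rightarrow> 'a set \<Rightarrow> 'a rule set" where
  "reduct P I = {\<lparr>hd = hd r, bp = bp r, bm = {}, bmm = {}\<rparr> | r. r \<in> P \<and> bm r \<inter> I = {} \<and> bmm r \<subseteq> I}"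

definition HT :: "'a rule set \<Rightarrow> ('a set \<times> 'a set) set" where
  "HT P = {(X, Y). X \<subseteq> Y \<and> Y \<subseteq> atoms P \<and> sat Y P \<and> sat X (reduct P Y)}"

definition AS :: "'a rule set \<Rightarrow> 'a set set" where
  "AS P = {Y. (Y, Y) \<in> HT P \<and> \<not> (\<exists>X. X \<subset> Y \<and> (X, Y) \<in> HT P)}"

definition tautological :: "'a rule \<Rightarrow> bool" where
  "tautological r \<longleftrightarrow> hd r \<inter> bp r \<noteq> {} \<or> bp r \<inter> bm r \<noteq> {} \<or> bm r \<inter> bmm r \<noteq> {}"

definition minimal_in :: "'a rule \<Rightarrow> 'a rule set \<Rightarrow> bool" where
  "minimal_in r P \<longleftrightarrow> \<not> (\<exists>r'\<in>P. (hd r' \<subseteq> hd r \<and> body r' \<subset> body r) \<or>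
                                  (hd r' \<subset> hd r \<and> body r' \<subseteq> body r))"

definition NF :: "'a rule set \<Rightarrow> 'a rule set" where
  "NF P = (let P1 = {r \<in> P. \<not> tautological r};
               P2 = (\<lambda>r. r\<lparr>bmm := bmm r - bp r\<rparr>) ` P1;
               P3 = (\<lambda>r. r\<lparr>hd := hd r - bm r\<rparr>) ` P2
           in {r \<in> P3. minimal_in r P3})"

text \<open>not(l), with not not not p = not p\<close>
fun lnot :: "'a lit \<Rightarrow> 'a lit" where
  "lnot (Pos a) = Neg a"
| "lnot (Neg a) = NegNeg a"
| "lnot (NegNeg a) = Neg a"

text \<open>not not (l), with not not not p = not p, not not not not p = not not p\<close>
fun lnn :: "'a lit \<Rightarrow> 'a lit" where
  "lnn (Pos a) = NegNeg a"
| "lnn (Neg a) = Neg a"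
| "lnn (NegNeg a) = NegNeg a"

definition Bq :: "'a \<Rightarrow> 'a rule \<Rightarrow> 'a lit set" where
  "Bq q r = body r - {Pos q, Neg q, NegNeg q}"

definition Hq :: "'a \<Rightarrow> 'a rule \<Rightarrow> 'a set" where
  "Hq q r = hd r - {q}"

text \<open>D_q(Q): each rule of Q contributes either not(l) for some l in B^{\q}(r)
  or not not h for some h in H^{\q}(r) (the partition is encoded by the choice).\<close>
definition Dq :: "'a \<Rightarrow> 'a rule set \<Rightarrow> 'a lit set set" where
  "Dq q Q = {g ` Q | g. \<forall>r\<in>Q. g r \<in> lnot ` Bq q r \<union> NegNeg ` Hq q r}"

definition fSP :: "'a rule set \<Rightarrow> 'a \<Rightarrow> 'a rule set" where
  "fSP P q = (let P' = NF P;
     R  = {r \<in> P'. q \<notin> atoms_rule r};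
     R0 = {r \<in> P'. Pos q \<in> body r};
     R1 = {r \<in> P'. Neg q \<in> body r};
     R2 = {r \<in> P'. NegNeg q \<in> body r \<and> q \<notin> hd r};
     R3 = {r \<in> P'. NegNeg q \<in> body r \<and> q \<in> hd r};
     R4 = {r \<in> P'. NegNeg q \<notin> body r \<and> q \<in> hd r};
     B' = Bq q; H' = Hq q;
     P'' = R
       \<union> {mk_rule (hd r0 \<union> H' r4) (B' r0 \<union> body r4) | r0 r4. r0 \<in> R0 \<and> r4 \<in> R4}
       \<union> {mk_rule (hd r0 \<union> H' r3) (B' r0 \<union> B' r3 \<union> Neg ` H' r' \<union> lnn ` B' r')
           | r0 r3 r'. r0 \<in> R0 \<and> r3 \<in> R3 \<and> r' \<in> R1 \<union> R4}
       \<union> {mk_rule (hd r0) (B' r0 \<union> {NegNeg h} \<union> D \<union> B' r3 \<union> Neg ` H' r3)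
           | r0 r3 h D. r0 \<in> R0 \<and> r3 \<in> R3 \<and> h \<in> hd r0 \<and> D \<in> Dq q ((R0 \<union> R2) - {r0})}
       \<union> {mk_rule (hd r2) (B' r2 \<union> Neg ` H' r4 \<union> lnn ` body r4) | r2 r4. r2 \<in> R2 \<and> r4 \<in> R4}
       \<union> {mk_rule (hd r2) (B' r2 \<union> Neg ` (H' r3 \<union> H' r') \<union> lnn ` (B' r3 \<union> B' r'))
           | r2 r3 r'. r2 \<in> R2 \<and> r3 \<in> R3 \<and> r' \<in> R1 \<union> R4}
       \<union> {mk_rule (hd r2) (B' r2 \<union> Neg ` H' r3 \<union> lnn ` (B' r3 \<union> {Pos h}) \<union> D)
           | r2 r3 h D. r2 \<in> R2 \<and> r3 \<in> R3 \<and> h \<in> hd r2 \<and> D \<in> Dq q ((R0 \<union> R2) - {r2})}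
       \<union> {mk_rule (H' r') (B' r' \<union> D)
           | r' D. r' \<in> R1 \<union> R4 \<and> D \<in> Dq q (R3 \<union> R4) \<and> D \<inter> lnot ` B' r' = {}}
       \<union> {mk_rule (H' r') (B' r' \<union> Neg ` (hd r \<union> H' r3) \<union> lnn ` (B' r \<union> B' r3) \<union> D)
           | r' r3 r D. r' \<in> R1 \<union> R4 \<and> r3 \<in> R3 \<and> r \<in> R0 \<union> R2 \<and> D \<in> Dq q R4
                        \<and> D \<inter> lnot ` B' r' = {}}
       \<union> {mk_rule (H' r') (B' r' \<union> Neg ` H' r3 \<union> lnn ` (B' r3 \<union> {Pos h}) \<union> D)
           | r' r3 h D. r' \<in> R1 \<union> R4 \<and> r3 \<in> R3 \<and> h \<in> H' r' \<and> D \<in> Dq q ((R1 \<union> R4) - {r'})}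
       \<union> {mk_rule (hd r0 \<union> H' r3) (B' r0 \<union> B' r3 \<union> Neg ` H' r3' \<union> lnn ` (B' r3' \<union> {Pos h}) \<union> D)
           | r0 r3 r3' D h. r0 \<in> R0 \<and> r3 \<in> R3 \<and> r3' \<in> R3 \<and> r3 \<noteq> r3'
                            \<and> D \<in> Dq q ((R0 \<union> R2) - {r0}) \<and> h \<in> hd r0}
   in NF P'')"

end

theory Submission
  imports Defs
begin

fun lv :: "'a set \<Rightarrow> 'a set \<Rightarrow> 'a lit \<Rightarrow> bool" where
  "lv X Y (Pos a) = (a \<in> X)"
| "lv X Y (Neg a) = (a \<notin> Y)"
| "lv X Y (NegNeg a) = (a \<in> Y)"

fun lat :: "'a lit \<Rightarrow> 'a" where
  "lat (Pos a) = a" | "lat (Neg a) = a" | "lat (NegNeg a) = a"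

definition hs :: "'a set \<Rightarrow> 'a set \<Rightarrow> 'a rule \<Rightarrow> bool" where
  "hs X Y r \<longleftrightarrow> ((\<forall>l\<in>body r. lv X Y l) \<longrightarrow> hd r \<inter> X \<noteq> {})"

lemma hs_alt: "hs X Y r \<longleftrightarrow> (bp r \<subseteq> X \<and> bm r \<inter> Y = {} \<and> bmm r \<subseteq> Y \<longrightarrow> hd r \<inter> X \<noteq> {})"
  unfolding hs_def body_def by (auto simp: ball_Un subset_iff disjoint_iff)

lemma reduct_img: "reduct P Y = (\<lambda>r. \<lparr>hd = hd r, bp = bp r, bm = {}, bmm = {}\<rparr>) ` {r \<in> P. bm r \<inter> Y = {} \<and> bmm r \<subseteq> Y}"
  unfolding reduct_def by auto

lemma sat_reduct: "sat X (reduct P Y) \<longleftrightarrow> (\<forall>r\<in>P. hs X Y r)"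
  unfolding sat_def reduct_img sat_rule_def hs_alt by auto

lemma sat_hs: "sat Y P \<longleftrightarrow> (\<forall>r\<in>P. hs Y Y r)"
  unfolding sat_def sat_rule_def hs_alt by auto

lemma body_mk[simp]: "body (mk_rule H L) = L"
proof -
  have "l \<in> L" if "l \<in> body (mk_rule H L)" for l using that by (auto simp: body_def mk_rule_def)
  moreover have "l \<in> body (mk_rule H L)" if "l \<in> L" for l using that by (cases l) (auto simp: body_def mk_rule_def)
  ultimately show ?thesis by blast
qed

lemma hd_mk[simp]: "hd (mk_rule H L) = H" by (simp add: mk_rule_def)

lemma hs_mk: "hs X Y (mk_rule H L) \<longleftrightarrow> ((\<forall>l\<in>L. lv X Y l) \<longrightarrow> H \<inter> X \<noteq> {})"
  by (simp add: hs_def)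

lemma finite_body: "finite_rule r \<Longrightarrow> finite (body r)"
  by (simp add: finite_rule_def body_def)

lemma fin_mk: "finite H \<Longrightarrow> finite L \<Longrightarrow> finite_rule (mk_rule H L)"
proof -
  assume "finite H" "finite L"
  have "{a. Pos a \<in> L} = Pos -` L" "{a. Neg a \<in> L} = Neg -` L" "{a. NegNeg a \<in> L} = NegNeg -` L" by auto
  with \<open>finite L\<close> \<open>finite H\<close> show ?thesis
    unfolding finite_rule_def mk_rule_def by (auto intro!: finite_vimageI simp: inj_def)
qed

lemma body_sub: "body r' \<subseteq> body r \<Longrightarrow> bp r' \<subseteq> bp r \<and> bm r' \<subseteq> bm r \<and> bmm r' \<subseteq> bmm r"
  unfolding body_def by blast

lemma hs_mono: "hd r' \<subseteq> hd r \<Longrightarrow> body r' \<subseteq> body r \<Longrightarrow> hs X Y r' \<Longrightarrow> hs X Y r"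
  unfolding hs_def by blast

lemma lv_mono: "X \<subseteq> Y \<Longrightarrow> lv X Y l \<Longrightarrow> lv Y Y l"
  by (cases l) auto

lemma lv_lnot[simp]: "lv X Y (lnot l) = (\<not> lv Y Y l)"
  by (cases l) auto

lemma lv_lnn[simp]: "lv X Y (lnn l) = lv Y Y l"
  by (cases l) auto

lemma lat_lnot[simp]: "lat (lnot l) = lat l" by (cases l) auto
lemma lat_lnn[simp]: "lat (lnn l) = lat l" by (cases l) auto

lemma lv_minus: "lat l \<noteq> q \<Longrightarrow> lv X (Y - {q}) l = lv X Y l"
  by (cases l) auto
lemma lv_ins: "lat l \<noteq> q \<Longrightarrow> lv (insert q X) Y l = lv X Y l"
  by (cases l) auto
lemma lv_minus2: "lat l \<noteq> q \<Longrightarrow> lv (X - {q}) Y l = lv X Y l"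
  by (cases l) auto

lemma Bq_lat: "l \<in> Bq q r \<Longrightarrow> lat l \<noteq> q"
  unfolding Bq_def body_def by auto

lemma Bq_sub: "Bq q r \<subseteq> body r" unfolding Bq_def by auto

lemma Hq_q[simp]: "q \<notin> Hq q r" unfolding Hq_def by auto

lemma body_q: "Pos q \<in> body r \<longleftrightarrow> q \<in> bp r" "Neg q \<in> body r \<longleftrightarrow> q \<in> bm r" "NegNeg q \<in> body r \<longleftrightarrow> q \<in> bmm r"
  unfolding body_def by auto

lemma body_split0: "(\<forall>l\<in>body r. Q l) \<longleftrightarrow> (\<forall>l\<in>Bq q r. Q l) \<and> (Pos q \<in> body r \<longrightarrow> Q (Pos q))
   \<and> (Neg q \<in> body r \<longrightarrow> Q (Neg q)) \<and> (NegNeg q \<in> body r \<longrightarrow> Q (NegNeg q))"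
  unfolding Bq_def by blast

lemma body_split: "(\<forall>l\<in>body r. lv X Y l) \<longleftrightarrow> (\<forall>l\<in>Bq q r. lv X Y l) \<and> (q \<in> bp r \<longrightarrow> q \<in> X)
   \<and> (q \<in> bm r \<longrightarrow> q \<notin> Y) \<and> (q \<in> bmm r \<longrightarrow> q \<in> Y)"
  unfolding body_split0[of r _ q] body_q by simp

lemma atoms_rule_q: "q \<notin> atoms_rule r \<longleftrightarrow> q \<notin> hd r \<and> q \<notin> bp r \<and> q \<notin> bm r \<and> q \<notin> bmm r"
  unfolding atoms_rule_def by auto

lemma hs_noq: "q \<notin> atoms_rule r \<Longrightarrow> hs X (Y - {q}) r \<Longrightarrow> hs X Y r"
  "q \<notin> atoms_rule r \<Longrightarrow> hs X Y r \<Longrightarrow> hs (X - {q}) (Y - {q}) r"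
  "q \<notin> atoms_rule r \<Longrightarrow> hs X (Y - {q}) r \<Longrightarrow> hs (insert q X) Y r"
  unfolding hs_alt atoms_rule_def by auto

definition upd :: "'a rule \<Rightarrow> 'a rule" where
  "upd r = (r\<lparr>bmm := bmm r - bp r\<rparr>)\<lparr>hd := hd (r\<lparr>bmm := bmm r - bp r\<rparr>) - bm (r\<lparr>bmm := bmm r - bp r\<rparr>)\<rparr>"

lemma upd_simps[simp]: "hd (upd r) = hd r - bm r" "bp (upd r) = bp r" "bm (upd r) = bm r" "bmm (upd r) = bmm r - bp r"
  by (simp_all add: upd_def)

definition P3 :: "'a rule set \<Rightarrow> 'a rule set" where
  "P3 P = upd ` {r \<in> P. \<not> tautological r}"

lemma NF_P3: "NF P = {r \<in> P3 P. minimal_in r (P3 P)}"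
proof -
  have "(\<lambda>r. r\<lparr>hd := hd r - bm r\<rparr>) ` (\<lambda>r. r\<lparr>bmm := bmm r - bp r\<rparr>) ` A = upd ` A" for A :: "'a rule set"
    unfolding upd_def image_image by simp
  then show ?thesis unfolding NF_def P3_def Let_def by simp
qed

lemma NF_elem: "r \<in> NF P \<Longrightarrow> \<exists>r0\<in>P. \<not> tautological r0 \<and> r = upd r0"
  unfolding NF_P3 P3_def by auto

lemma NF_struct: assumes "r \<in> NF P"
  shows "\<not> tautological r" "bmm r \<inter> bp r = {}" "hd r \<inter> bm r = {}"
  using NF_elem[OF assms] unfolding tautological_def by auto

lemma NF_fin: assumes "r \<in> NF P" "\<forall>r\<in>P. finite_rule r" shows "finite_rule r"
  using NF_elem[OF assms(1)] assms(2) unfolding finite_rule_def by auto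

lemma NF_finite: "finite P \<Longrightarrow> finite (NF P)"
  unfolding NF_P3 P3_def by auto

lemma NF_fwd: assumes "X \<subseteq> Y" "\<forall>r\<in>P. hs X Y r" shows "\<forall>r\<in>NF P. hs X Y r"
proof
  fix r assume "r \<in> NF P"
  then obtain r0 where "r0 \<in> P" "r = upd r0" using NF_elem by blast
  moreover have "hs X Y r0" using assms \<open>r0 \<in> P\<close> by blast
  ultimately show "hs X Y r" using assms(1) unfolding hs_alt by auto
qed

lemma min_lemma: assumes "finite_rule r" "r \<in> S" "\<forall>r'\<in>S. minimal_in r' S \<longrightarrow> hs X Y r'"
  shows "hs X Y r"
  using assms
proof (induction "card (hd r) + card (body r)" arbitrary: r rule: less_induct)
  case less
  show ?case
  proof (cases "minimal_in r S")
    case True then show ?thesis using less by blast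
  next
    case False
    then obtain r' where r': "r' \<in> S" "(hd r' \<subseteq> hd r \<and> body r' \<subset> body r) \<or> (hd r' \<subset> hd r \<and> body r' \<subseteq> body r)"
      unfolding minimal_in_def by blast
    have fr: "finite (hd r)" "finite (body r)" using less.prems(1) finite_body by (auto simp: finite_rule_def)
    have sub: "hd r' \<subseteq> hd r" "body r' \<subseteq> body r" using r' by auto
    have "finite_rule r'" using body_sub[OF sub(2)] less.prems(1) sub(1) unfolding finite_rule_def
      by (meson finite_subset)
    moreover have "card (hd r') + card (body r') < card (hd r) + card (body r)"
      using r'(2) fr psubset_card_mono[of "hd r"] psubset_card_mono[of "body r"] card_mono[OF fr(1)] card_mono[OF fr(2)]
      by (metis add_le_less_mono add_less_le_mono)
    ultimately have "hs X Y r'" using less r' by blast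
    then show ?thesis using hs_mono sub by blast
  qed
qed

lemma NF_bwd: assumes "X \<subseteq> Y" "r \<in> P" "finite_rule r" "\<forall>r'\<in>NF P. hs X Y r'" shows "hs X Y r"
proof (cases "tautological r")
  case True then show ?thesis using assms(1) unfolding tautological_def hs_alt by auto
next
  case False
  then have "upd r \<in> P3 P" using assms(2) unfolding P3_def by auto
  moreover have "finite_rule (upd r)" using assms(3) unfolding finite_rule_def by auto
  ultimately have "hs X Y (upd r)" using min_lemma[of "upd r" "P3 P" X Y] assms(4) unfolding NF_P3 by blast
  then show ?thesis using assms(1) unfolding hs_alt by auto
qed

definition Ppp :: "'a rule set \<Rightarrow> 'a \<Rightarrow> 'a rule set" where
  "Ppp P q = (let P' = NF P;
     R  = {r \<in> P'. q \<notin> atoms_rule r};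
     R0 = {r \<in> P'. Pos q \<in> body r};
     R1 = {r \<in> P'. Neg q \<in> body r};
     R2 = {r \<in> P'. NegNeg q \<in> body r \<and> q \<notin> hd r};
     R3 = {r \<in> P'. NegNeg q \<in> body r \<and> q \<in> hd r};
     R4 = {r \<in> P'. NegNeg q \<notin> body r \<and> q \<in> hd r};
     B' = Bq q; H' = Hq q;
     P'' = R
       \<union> {mk_rule (hd r0 \<union> H' r4) (B' r0 \<union> body r4) | r0 r4. r0 \<in> R0 \<and> r4 \<in> R4}
       \<union> {mk_rule (hd r0 \<union> H' r3) (B' r0 \<union> B' r3 \<union> Neg ` H' r' \<union> lnn ` B' r')
           | r0 r3 r'. r0 \<in> R0 \<and> r3 \<in> R3 \<and> r' \<in> R1 \<union> R4}
       \<union> {mk_rule (hd r0) (B' r0 \<union> {NegNeg h} \<union> D \<union> B' r3 \<union> Neg ` H' r3)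
           | r0 r3 h D. r0 \<in> R0 \<and> r3 \<in> R3 \<and> h \<in> hd r0 \<and> D \<in> Dq q ((R0 \<union> R2) - {r0})}
       \<union> {mk_rule (hd r2) (B' r2 \<union> Neg ` H' r4 \<union> lnn ` body r4) | r2 r4. r2 \<in> R2 \<and> r4 \<in> R4}
       \<union> {mk_rule (hd r2) (B' r2 \<union> Neg ` (H' r3 \<union> H' r') \<union> lnn ` (B' r3 \<union> B' r'))
           | r2 r3 r'. r2 \<in> R2 \<and> r3 \<in> R3 \<and> r' \<in> R1 \<union> R4}
       \<union> {mk_rule (hd r2) (B' r2 \<union> Neg ` H' r3 \<union> lnn ` (B' r3 \<union> {Pos h}) \<union> D)
           | r2 r3 h D. r2 \<in> R2 \<and> r3 \<in> R3 \<and> h \<in> hd r2 \<and> D \<in> Dq q ((R0 \<union> R2) - {r2})}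
       \<union> {mk_rule (H' r') (B' r' \<union> D)
           | r' D. r' \<in> R1 \<union> R4 \<and> D \<in> Dq q (R3 \<union> R4) \<and> D \<inter> lnot ` B' r' = {}}
       \<union> {mk_rule (H' r') (B' r' \<union> Neg ` (hd r \<union> H' r3) \<union> lnn ` (B' r \<union> B' r3) \<union> D)
           | r' r3 r D. r' \<in> R1 \<union> R4 \<and> r3 \<in> R3 \<and> r \<in> R0 \<union> R2 \<and> D \<in> Dq q R4
                        \<and> D \<inter> lnot ` B' r' = {}}
       \<union> {mk_rule (H' r') (B' r' \<union> Neg ` H' r3 \<union> lnn ` (B' r3 \<union> {Pos h}) \<union> D)
           | r' r3 h D. r' \<in> R1 \<union> R4 \<and> r3 \<in> R3 \<and> h \<in> H' r' \<and> D \<in> Dq q ((R1 \<union> R4) - {r'})}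
       \<union> {mk_rule (hd r0 \<union> H' r3) (B' r0 \<union> B' r3 \<union> Neg ` H' r3' \<union> lnn ` (B' r3' \<union> {Pos h}) \<union> D)
           | r0 r3 r3' D h. r0 \<in> R0 \<and> r3 \<in> R3 \<and> r3' \<in> R3 \<and> r3 \<noteq> r3'
                            \<and> D \<in> Dq q ((R0 \<union> R2) - {r0}) \<and> h \<in> hd r0}
   in P'')"

lemma fSP_eq: "fSP P q = NF (Ppp P q)"
  unfolding fSP_def Ppp_def Let_def by (rule refl)

definition "Rs P q = {r \<in> NF P. q \<notin> atoms_rule r}"
definition "R0s P q = {r \<in> NF P. Pos q \<in> body r}"
definition "R1s P q = {r \<in> NF P. Neg q \<in> body r}"
definition "R2s P q = {r \<in> NF P. NegNeg q \<in> body r \<and> q \<notin> hd r}"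
definition "R3s P q = {r \<in> NF P. NegNeg q \<in> body r \<and> q \<in> hd r}"
definition "R4s P q = {r \<in> NF P. NegNeg q \<notin> body r \<and> q \<in> hd r}"

lemmas Rdefs = Rs_def R0s_def R1s_def R2s_def R3s_def R4s_def

lemma in_R: "r \<in> Rs P q \<Longrightarrow> r \<in> Ppp P q"
  unfolding Ppp_def Let_def apply (rule UnI1, rule UnI1, rule UnI1, rule UnI1, rule UnI1, rule UnI1, rule UnI1, rule UnI1, rule UnI1, rule UnI1) unfolding Rdefs by blast

lemma in_1a: "r0 \<in> R0s P q \<Longrightarrow> r4 \<in> R4s P q \<Longrightarrow>
   mk_rule (hd r0 \<union> Hq q r4) (Bq q r0 \<union> body r4) \<in> Ppp P q"
  unfolding Ppp_def Let_def apply (rule UnI1, rule UnI1, rule UnI1, rule UnI1, rule UnI1, rule UnI1, rule UnI1, rule UnI1, rule UnI1, rule UnI2) unfolding Rdefs by blast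

lemma in_2a: "r0 \<in> R0s P q \<Longrightarrow> r3 \<in> R3s P q \<Longrightarrow> r' \<in> R1s P q \<union> R4s P q \<Longrightarrow>
   mk_rule (hd r0 \<union> Hq q r3) (Bq q r0 \<union> Bq q r3 \<union> Neg ` Hq q r' \<union> lnn ` Bq q r') \<in> Ppp P q"
  unfolding Ppp_def Let_def apply (rule UnI1, rule UnI1, rule UnI1, rule UnI1, rule UnI1, rule UnI1, rule UnI1, rule UnI1, rule UnI2) unfolding Rdefs by blast

lemma in_3a: "r0 \<in> R0s P q \<Longrightarrow> r3 \<in> R3s P q \<Longrightarrow> h \<in> hd r0 \<Longrightarrow> D \<in> Dq q ((R0s P q \<union> R2s P q) - {r0}) \<Longrightarrow>
   mk_rule (hd r0) (Bq q r0 \<union> {NegNeg h} \<union> D \<union> Bq q r3 \<union> Neg ` Hq q r3) \<in> Ppp P q"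
  unfolding Ppp_def Let_def apply (rule UnI1, rule UnI1, rule UnI1, rule UnI1, rule UnI1, rule UnI1, rule UnI1, rule UnI2) unfolding Rdefs by blast

lemma in_1b: "r2 \<in> R2s P q \<Longrightarrow> r4 \<in> R4s P q \<Longrightarrow>
   mk_rule (hd r2) (Bq q r2 \<union> Neg ` Hq q r4 \<union> lnn ` body r4) \<in> Ppp P q"
  unfolding Ppp_def Let_def apply (rule UnI1, rule UnI1, rule UnI1, rule UnI1, rule UnI1, rule UnI1, rule UnI2) unfolding Rdefs by blast

lemma in_3b: "r2 \<in> R2s P q \<Longrightarrow> r3 \<in> R3s P q \<Longrightarrow> h \<in> hd r2 \<Longrightarrow> D \<in> Dq q ((R0s P q \<union> R2s P q) - {r2}) \<Longrightarrow>
   mk_rule (hd r2) (Bq q r2 \<union> Neg ` Hq q r3 \<union> lnn ` (Bq q r3 \<union> {Pos h}) \<union> D) \<in> Ppp P q"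
  unfolding Ppp_def Let_def apply (rule UnI1, rule UnI1, rule UnI1, rule UnI1, rule UnI2) unfolding Rdefs by blast

lemma in_4: "r' \<in> R1s P q \<union> R4s P q \<Longrightarrow> D \<in> Dq q (R3s P q \<union> R4s P q) \<Longrightarrow> D \<inter> lnot ` Bq q r' = {} \<Longrightarrow>
   mk_rule (Hq q r') (Bq q r' \<union> D) \<in> Ppp P q"
  unfolding Ppp_def Let_def apply (rule UnI1, rule UnI1, rule UnI1, rule UnI2) unfolding Rdefs by blast

lemma in_6: "r' \<in> R1s P q \<union> R4s P q \<Longrightarrow> r3 \<in> R3s P q \<Longrightarrow> h \<in> Hq q r' \<Longrightarrow> D \<in> Dq q ((R1s P q \<union> R4s P q) - {r'}) \<Longrightarrow>
   mk_rule (Hq q r') (Bq q r' \<union> Neg ` Hq q r3 \<union> lnn ` (Bq q r3 \<union> {Pos h}) \<union> D) \<in> Ppp P q"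
  unfolding Ppp_def Let_def apply (rule UnI1, rule UnI2) unfolding Rdefs by blast

lemma in_7: "r0 \<in> R0s P q \<Longrightarrow> r3 \<in> R3s P q \<Longrightarrow> r3' \<in> R3s P q \<Longrightarrow> r3 \<noteq> r3' \<Longrightarrow>
   D \<in> Dq q ((R0s P q \<union> R2s P q) - {r0}) \<Longrightarrow> h \<in> hd r0 \<Longrightarrow>
   mk_rule (hd r0 \<union> Hq q r3) (Bq q r0 \<union> Bq q r3 \<union> Neg ` Hq q r3' \<union> lnn ` (Bq q r3' \<union> {Pos h}) \<union> D) \<in> Ppp P q"
  unfolding Ppp_def Let_def apply ( rule UnI2) unfolding Rdefs by blast

lemma Ppp_eq: "Ppp P q = Rs P q
       \<union> {mk_rule (hd r0 \<union> Hq q r4) (Bq q r0 \<union> body r4) | r0 r4. r0 \<in> R0s P q \<and> r4 \<in> R4s P q}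
       \<union> {mk_rule (hd r0 \<union> Hq q r3) (Bq q r0 \<union> Bq q r3 \<union> Neg ` Hq q r' \<union> lnn ` Bq q r')
           | r0 r3 r'. r0 \<in> R0s P q \<and> r3 \<in> R3s P q \<and> r' \<in> R1s P q \<union> R4s P q}
       \<union> {mk_rule (hd r0) (Bq q r0 \<union> {NegNeg h} \<union> D \<union> Bq q r3 \<union> Neg ` Hq q r3)
           | r0 r3 h D. r0 \<in> R0s P q \<and> r3 \<in> R3s P q \<and> h \<in> hd r0 \<and> D \<in> Dq q ((R0s P q \<union> R2s P q) - {r0})}
       \<union> {mk_rule (hd r2) (Bq q r2 \<union> Neg ` Hq q r4 \<union> lnn ` body r4) | r2 r4. r2 \<in> R2s P q \<and> r4 \<in> R4s P q}
       \<union> {mk_rule (hd r2) (Bq q r2 \<union> Neg ` (Hq q r3 \<union> Hq q r') \<union> lnn ` (Bq q r3 \<union> Bq q r'))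
           | r2 r3 r'. r2 \<in> R2s P q \<and> r3 \<in> R3s P q \<and> r' \<in> R1s P q \<union> R4s P q}
       \<union> {mk_rule (hd r2) (Bq q r2 \<union> Neg ` Hq q r3 \<union> lnn ` (Bq q r3 \<union> {Pos h}) \<union> D)
           | r2 r3 h D. r2 \<in> R2s P q \<and> r3 \<in> R3s P q \<and> h \<in> hd r2 \<and> D \<in> Dq q ((R0s P q \<union> R2s P q) - {r2})}
       \<union> {mk_rule (Hq q r') (Bq q r' \<union> D)
           | r' D. r' \<in> R1s P q \<union> R4s P q \<and> D \<in> Dq q (R3s P q \<union> R4s P q) \<and> D \<inter> lnot ` Bq q r' = {}}
       \<union> {mk_rule (Hq q r') (Bq q r' \<union> Neg ` (hd r \<union> Hq q r3) \<union> lnn ` (Bq q r \<union> Bq q r3) \<union> D)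
           | r' r3 r D. r' \<in> R1s P q \<union> R4s P q \<and> r3 \<in> R3s P q \<and> r \<in> R0s P q \<union> R2s P q \<and> D \<in> Dq q (R4s P q)
                        \<and> D \<inter> lnot ` Bq q r' = {}}
       \<union> {mk_rule (Hq q r') (Bq q r' \<union> Neg ` Hq q r3 \<union> lnn ` (Bq q r3 \<union> {Pos h}) \<union> D)
           | r' r3 h D. r' \<in> R1s P q \<union> R4s P q \<and> r3 \<in> R3s P q \<and> h \<in> Hq q r' \<and> D \<in> Dq q ((R1s P q \<union> R4s P q) - {r'})}
       \<union> {mk_rule (hd r0 \<union> Hq q r3) (Bq q r0 \<union> Bq q r3 \<union> Neg ` Hq q r3' \<union> lnn ` (Bq q r3' \<union> {Pos h}) \<union> D)
           | r0 r3 r3' D h. r0 \<in> R0s P q \<and> r3 \<in> R3s P q \<and> r3' \<in> R3s P q \<and> r3 \<noteq> r3'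
                            \<and> D \<in> Dq q ((R0s P q \<union> R2s P q) - {r0}) \<and> h \<in> hd r0}"
  unfolding Ppp_def Let_def Rdefs by (rule refl)

definition nsup :: "'a set \<Rightarrow> 'a \<Rightarrow> 'a rule \<Rightarrow> bool" where
  "nsup Y q r \<longleftrightarrow> (\<exists>l\<in>Bq q r. \<not> lv Y Y l) \<or> Hq q r \<inter> Y \<noteq> {}"

lemma nsup_minus: "nsup (Y - {q}) q r = nsup Y q r"
proof -
  have "lv (Y - {q}) (Y - {q}) l = lv Y Y l" if "l \<in> Bq q r" for l
    using Bq_lat[OF that] by (cases l) auto
  moreover have "Hq q r \<inter> (Y - {q}) = Hq q r \<inter> Y" using Hq_q[of q r] by blast
  ultimately show ?thesis unfolding nsup_def by auto
qed

lemma Dq_true: assumes "D \<in> Dq q Q" "\<forall>d\<in>D. lv X Z d" "r \<in> Q" shows "nsup Z q r"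
proof -
  obtain g where g: "D = g ` Q" "\<forall>r\<in>Q. g r \<in> lnot ` Bq q r \<union> NegNeg ` Hq q r" using assms(1) unfolding Dq_def by blast
  then have "lv X Z (g r)" "g r \<in> lnot ` Bq q r \<union> NegNeg ` Hq q r" using assms by auto
  then show ?thesis unfolding nsup_def by auto
qed

lemma Dq_lat: assumes "D \<in> Dq q Q" "d \<in> D" shows "lat d \<noteq> q"
proof -
  obtain g where g: "D = g ` Q" "\<forall>r\<in>Q. g r \<in> lnot ` Bq q r \<union> NegNeg ` Hq q r" using assms(1) unfolding Dq_def by blast
  then obtain r where r: "r \<in> Q" "d = g r" using assms(2) by blast
  then have "d \<in> lnot ` Bq q r \<union> NegNeg ` Hq q r" using g by blast
  then show ?thesis using Bq_lat Hq_q by fastforce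
qed

lemma Dq_ex: assumes "finite Q" "\<forall>r\<in>Q. nsup Z q r"
  shows "\<exists>D\<in>Dq q Q. (\<forall>d\<in>D. lv X Z d) \<and> finite D"
proof -
  define g where "g r = (if \<exists>l\<in>Bq q r. \<not> lv Z Z l then lnot (SOME l. l \<in> Bq q r \<and> \<not> lv Z Z l)
        else NegNeg (SOME h. h \<in> Hq q r \<inter> Z))" for r
  have g: "g r \<in> lnot ` Bq q r \<union> NegNeg ` Hq q r \<and> lv X Z (g r)" if "r \<in> Q" for r
  proof (cases "\<exists>l\<in>Bq q r. \<not> lv Z Z l")
    case True
    then have "(SOME l. l \<in> Bq q r \<and> \<not> lv Z Z l) \<in> Bq q r \<and> \<not> lv Z Z (SOME l. l \<in> Bq q r \<and> \<not> lv Z Z l)"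
      by (metis (mono_tags, lifting) someI_ex)
    then show ?thesis using True unfolding g_def by auto
  next
    case False
    then have "\<exists>h. h \<in> Hq q r \<inter> Z" using assms(2) that unfolding nsup_def by blast
    then have "(SOME h. h \<in> Hq q r \<inter> Z) \<in> Hq q r \<inter> Z" by (rule someI_ex)
    then show ?thesis using False unfolding g_def by auto
  qed
  have "g ` Q \<in> Dq q Q" unfolding Dq_def using g by blast
  moreover have "\<forall>d\<in>g ` Q. lv X Z d" using g by blast
  ultimately show ?thesis using assms(1) by blast
qed

lemma NF_q: assumes "r \<in> NF P" shows "\<not>(q\<in>hd r \<and> q\<in>bp r) \<and> \<not>(q\<in>bp r \<and> q\<in>bm r) \<and> \<not>(q\<in>bm r \<and> q\<in>bmm r)
  \<and> \<not>(q\<in>bmm r \<and> q\<in>bp r) \<and> \<not>(q\<in>hd r \<and> q\<in>bm r)"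
proof -
  have "\<not> tautological r" "bmm r \<inter> bp r = {}" "hd r \<inter> bm r = {}" using NF_struct[OF assms] by auto
  then show ?thesis unfolding tautological_def by blast
qed

lemma R_facts:
  "r \<in> Rs P q \<Longrightarrow> r \<in> NF P \<and> q \<notin> atoms_rule r"
  "r \<in> R0s P q \<Longrightarrow> r \<in> NF P \<and> q \<in> bp r \<and> q \<notin> bm r \<and> q \<notin> bmm r \<and> q \<notin> hd r"
  "r \<in> R1s P q \<Longrightarrow> r \<in> NF P \<and> q \<notin> bp r \<and> q \<in> bm r \<and> q \<notin> bmm r \<and> q \<notin> hd r"
  "r \<in> R2s P q \<Longrightarrow> r \<in> NF P \<and> q \<notin> bp r \<and> q \<notin> bm r \<and> q \<in> bmm r \<and> q \<notin> hd r"
  "r \<in> R3s P q \<Longrightarrow> r \<in> NF P \<and> q \<notin> bp r \<and> q \<notin> bm r \<and> q \<in> bmm r \<and> q \<in> hd r"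
  "r \<in> R4s P q \<Longrightarrow> r \<in> NF P \<and> q \<notin> bp r \<and> q \<notin> bm r \<and> q \<notin> bmm r \<and> q \<in> hd r"
  unfolding Rdefs body_q using NF_q[of r P q] by blast+

lemma R_cases: "r \<in> NF P \<Longrightarrow> r \<in> Rs P q \<or> r \<in> R0s P q \<or> r \<in> R1s P q \<or> r \<in> R2s P q \<or> r \<in> R3s P q \<or> r \<in> R4s P q"
  unfolding Rdefs body_q atoms_rule_def by auto

lemma hd_Hq: "q \<notin> hd r \<Longrightarrow> Hq q r = hd r" unfolding Hq_def by auto

lemma body_R4: "r \<in> R4s P q \<Longrightarrow> body r = Bq q r"
  using R_facts(6)[of r P q] unfolding Bq_def body_def by auto

lemma atoms_mk: "q \<notin> atoms_rule (mk_rule H L) \<longleftrightarrow> q \<notin> H \<and> (\<forall>l\<in>L. lat l \<noteq> q)"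
proof -
  have e: "lat l = q \<longleftrightarrow> l = Pos q \<or> l = Neg q \<or> l = NegNeg q" for l by (cases l) auto
  have "atoms_rule (mk_rule H L) = H \<union> {a. Pos a \<in> L} \<union> {a. Neg a \<in> L} \<union> {a. NegNeg a \<in> L}"
    unfolding atoms_rule_def mk_rule_def by simp
  then have "q \<in> atoms_rule (mk_rule H L) \<longleftrightarrow> q \<in> H \<or> (\<exists>l\<in>L. lat l = q)"
    by (simp add: e bex_disj_distrib)
  then show ?thesis by blast
qed

lemma lnn_lat: "(\<forall>l\<in>lnn ` A. lat l \<noteq> q) \<longleftrightarrow> (\<forall>l\<in>A. lat l \<noteq> q)" by auto

lemma Bq_lat': "\<forall>l\<in>Bq q r. lat l \<noteq> q" by (intro ballI) (rule Bq_lat)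
lemma Dq_lat': "D \<in> Dq q Q \<Longrightarrow> \<forall>l\<in>D. lat l \<noteq> q" by (intro ballI) (rule Dq_lat)
lemma R_hd: "r \<in> R0s P q \<Longrightarrow> q \<notin> hd r" "r \<in> R2s P q \<Longrightarrow> q \<notin> hd r"
  using R_facts(2)[of r P q] R_facts(4)[of r P q] by blast+

lemma Hq_q': "\<forall>l\<in>Hq q r. l \<noteq> q" unfolding Hq_def by blast

lemma Ppp_qfree: "\<rho> \<in> Ppp P q \<Longrightarrow> q \<notin> atoms_rule \<rho>"
  unfolding Ppp_eq
  apply (elim UnE CollectE exE conjE)
  apply (simp_all only: atoms_mk)
  apply (simp_all add: ball_Un Bq_lat' Dq_lat' lnn_lat R_hd body_R4 R_facts(1) Hq_q')
  apply (auto dest: R_hd)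
  done

lemma nsup_bt: "nsup Y q r \<Longrightarrow> \<forall>l\<in>Bq q r. lv Y Y l \<Longrightarrow> Hq q r \<inter> Y \<noteq> {}"
  unfolding nsup_def by blast

lemma not_nsup: "\<not> nsup Y q r \<Longrightarrow> (\<forall>l\<in>Bq q r. lv Y Y l) \<and> Hq q r \<inter> Y = {}"
  unfolding nsup_def by blast

lemma Hq_sub: "Hq q r \<subseteq> hd r" unfolding Hq_def by blast

lemma hd_split: "hd r \<inter> X \<noteq> {} \<Longrightarrow> q \<notin> X \<Longrightarrow> Hq q r \<inter> X \<noteq> {}"
  unfolding Hq_def by blast

lemma R_sub: "R0s P q \<subseteq> NF P" "R1s P q \<subseteq> NF P" "R2s P q \<subseteq> NF P" "R3s P q \<subseteq> NF P" "R4s P q \<subseteq> NF P" "Rs P q \<subseteq> NF P"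
  unfolding Rdefs by auto

locale ctx =
  fixes P R :: "'a rule set" and Y :: "'a set" and q :: 'a
  assumes finP: "finite P" and finr: "\<forall>r\<in>P. finite_rule r" and Rq: "\<forall>r\<in>R. q \<notin> atoms_rule r"
    and Ymod: "\<forall>r\<in>P \<union> R. hs Y Y r"
    and Ymin: "\<And>X. X \<subset> Y \<Longrightarrow> \<forall>r\<in>P \<union> R. hs X Y r \<Longrightarrow> False"
begin

lemma YP': "\<forall>r\<in>NF P. hs Y Y r"
  using NF_fwd[of Y Y P] Ymod by blast

lemma minP': assumes "X \<subset> Y" "\<forall>r\<in>NF P. hs X Y r" "\<forall>r\<in>R. hs X Y r" shows False
proof -
  have "\<forall>r\<in>P. hs X Y r" using NF_bwd[of X Y _ P] assms finr by blast
  then show False using Ymin[OF assms(1)] assms(3) by blast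
qed

lemma finNF: "finite (NF P)" using NF_finite finP by blast

lemma fins: assumes "r \<in> NF P" shows "finite (Bq q r)" "finite (Hq q r)" "finite (hd r)" "finite (body r)"
proof -
  have f: "finite_rule r" using NF_fin assms finr by blast
  then show "finite (body r)" by (rule finite_body)
  then show "finite (Bq q r)" using Bq_sub finite_subset by metis
  show "finite (hd r)" using f unfolding finite_rule_def by blast
  then show "finite (Hq q r)" unfolding Hq_def by blast
qed

lemma finR: "finite (R0s P q)" "finite (R1s P q)" "finite (R2s P q)" "finite (R3s P q)" "finite (R4s P q)"
  using R_sub finNF finite_subset by metis+

lemma A1: assumes "q \<notin> Y" "r \<in> R1s P q \<union> R4s P q" shows "nsup Y q r"
proof (rule ccontr)
  assume "\<not> nsup Y q r"
  note bb = not_nsup[OF this]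
  have b: "\<forall>l\<in>Bq q r. lv Y Y l" "Hq q r \<inter> Y = {}" using bb by (rule conjunct1, rule conjunct2)
  have f: "r \<in> NF P" "q \<notin> bp r" "q \<notin> bmm r" using assms(2) R_facts(3,6)[of r P q] by auto
  then have "hs Y Y r" using YP' by blast
  moreover have "\<forall>l\<in>body r. lv Y Y l" unfolding body_split[of r Y Y q] using b f assms(1) by simp
  ultimately have "hd r \<inter> Y \<noteq> {}" unfolding hs_def by blast
  then show False using hd_split[of r Y q] assms(1) b by simp
qed

lemma A2: assumes "q \<in> Y" "r \<in> R0s P q \<union> R2s P q" shows "nsup Y q r"
proof (rule ccontr)
  assume "\<not> nsup Y q r"
  note bb = not_nsup[OF this]
  have b: "\<forall>l\<in>Bq q r. lv Y Y l" "Hq q r \<inter> Y = {}" using bb by (rule conjunct1, rule conjunct2)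
  have f: "r \<in> NF P" "q \<notin> bm r" "q \<notin> hd r" using assms(2) R_facts(2,4)[of r P q] by auto
  then have "hs Y Y r" using YP' by blast
  moreover have "\<forall>l\<in>body r. lv Y Y l" unfolding body_split[of r Y Y q] using b f assms(1) by simp
  ultimately have "hd r \<inter> Y \<noteq> {}" unfolding hs_def by blast
  then show False using hd_Hq[of q r] f b by simp
qed

lemma hs_shrink: "q \<notin> hd r \<Longrightarrow> hs Y Y r \<Longrightarrow> hs (Y - {q}) Y r"
  unfolding hs_alt by blast

lemma A3: assumes "q \<in> Y" shows "\<exists>s\<in>R3s P q \<union> R4s P q. \<not> nsup Y q s"
proof (rule ccontr)
  assume "\<not> ?thesis"
  then have ns: "\<forall>s\<in>R3s P q \<union> R4s P q. nsup Y q s" by simp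
  have "Y - {q} \<subset> Y" using assms by auto
  moreover have "\<forall>r\<in>NF P. hs (Y - {q}) Y r"
  proof
    fix r assume r: "r \<in> NF P"
    show "hs (Y - {q}) Y r"
    proof (cases "q \<in> hd r")
      case False then show ?thesis using hs_shrink YP' r by simp
    next
      case True
      have c: "r \<in> Rs P q \<or> r \<in> R0s P q \<or> r \<in> R1s P q \<or> r \<in> R2s P q \<or> r \<in> R3s P q \<or> r \<in> R4s P q"
        by (rule R_cases[OF r])
      have "r \<notin> Rs P q" using R_facts(1)[of r P q] True unfolding atoms_rule_q by auto
      moreover have "r \<notin> R0s P q" "r \<notin> R1s P q" "r \<notin> R2s P q"
        using R_facts(2,3,4)[of r P q] True by auto
      ultimately have "r \<in> R3s P q \<union> R4s P q" using c by auto
      then have "nsup Y q r" using ns by simp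
      then consider (a) l where "l \<in> Bq q r" "\<not> lv Y Y l" | (b) "Hq q r \<inter> Y \<noteq> {}" unfolding nsup_def by auto
      then show ?thesis
      proof cases
        case a
        then have "\<not> lv (Y - {q}) Y l" using lv_mono[of "Y - {q}" Y l] by auto
        moreover have "l \<in> body r" using Bq_sub[of q r] a(1) by (rule subsetD)
        ultimately show ?thesis unfolding hs_def by auto
      next
        case b
        then have "hd r \<inter> (Y - {q}) \<noteq> {}" unfolding Hq_def by auto
        then show ?thesis unfolding hs_def by auto
      qed
    qed
  qed
  moreover have "\<forall>r\<in>R. hs (Y - {q}) Y r"
  proof
    fix r assume r: "r \<in> R"
    then have "q \<notin> hd r" using Rq unfolding atoms_rule_q by auto
    moreover have "hs Y Y r" using Ymod r by simp
    ultimately show "hs (Y - {q}) Y r" by (rule hs_shrink)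
  qed
  ultimately show False using minP' by auto
qed

end

lemma Neg_true: "(\<forall>l\<in>Neg ` A. lv X Y l) \<longleftrightarrow> A \<inter> Y = {}" by auto
lemma lnn_true: "(\<forall>l\<in>lnn ` A. lv X Y l) \<longleftrightarrow> (\<forall>l\<in>A. lv Y Y l)" by auto

context ctx begin

lemma C14: "q \<notin> Y \<Longrightarrow> r \<in> R1s P q \<union> R4s P q \<Longrightarrow> \<forall>l\<in>Bq q r. lv Y Y l \<Longrightarrow> Hq q r \<inter> Y \<noteq> {}"
  using A1 nsup_bt by metis

lemma C02: "q \<in> Y \<Longrightarrow> r \<in> R0s P q \<union> R2s P q \<Longrightarrow> \<forall>l\<in>Bq q r. lv Y Y l \<Longrightarrow> Hq q r \<inter> Y \<noteq> {}"
  using A2 nsup_bt by metis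

lemma C02h: "q \<in> Y \<Longrightarrow> r \<in> R0s P q \<union> R2s P q \<Longrightarrow> \<forall>l\<in>Bq q r. lv Y Y l \<Longrightarrow> hd r \<inter> Y \<noteq> {}"
  using C02 Hq_sub by fastforce

lemma m1_R: "r \<in> Rs P q \<Longrightarrow> hs Y Y r"
  using YP' R_sub(6)[of P q] by auto

lemma m1_1a: assumes "r0 \<in> R0s P q" "r4 \<in> R4s P q"
  shows "hs Y Y (mk_rule (hd r0 \<union> Hq q r4) (Bq q r0 \<union> body r4))"
  unfolding hs_mk
proof
  assume L: "\<forall>l\<in>Bq q r0 \<union> body r4. lv Y Y l"
  show "(hd r0 \<union> Hq q r4) \<inter> Y \<noteq> {}"
  proof (cases "q \<in> Y")
    case False
    have "Hq q r4 \<inter> Y \<noteq> {}" using C14[OF False] assms(2) L body_R4[OF assms(2)] by simp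
    then show ?thesis by auto
  next
    case True
    have "hd r0 \<inter> Y \<noteq> {}" using C02h[OF True] assms(1) L by simp
    then show ?thesis by auto
  qed
qed

lemma m1_2a: assumes "r0 \<in> R0s P q" "r3 \<in> R3s P q" "r' \<in> R1s P q \<union> R4s P q"
  shows "hs Y Y (mk_rule (hd r0 \<union> Hq q r3) (Bq q r0 \<union> Bq q r3 \<union> Neg ` Hq q r' \<union> lnn ` Bq q r'))"
  unfolding hs_mk
proof
  assume L: "\<forall>l\<in>Bq q r0 \<union> Bq q r3 \<union> Neg ` Hq q r' \<union> lnn ` Bq q r'. lv Y Y l"
  show "(hd r0 \<union> Hq q r3) \<inter> Y \<noteq> {}"
  proof (cases "q \<in> Y")
    case False
    have "Hq q r' \<inter> Y \<noteq> {}" using C14[OF False] assms(3) L by (simp add: ball_Un lnn_true)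
    moreover have "Hq q r' \<inter> Y = {}" using L by (auto simp add: ball_Un Neg_true)
    ultimately show ?thesis by simp
  next
    case True
    have "hd r0 \<inter> Y \<noteq> {}" using C02h[OF True] assms(1) L by simp
    then show ?thesis by auto
  qed
qed

lemma m1_3a: assumes "h \<in> hd r0"
  shows "hs Y Y (mk_rule (hd r0) (Bq q r0 \<union> {NegNeg h} \<union> D \<union> Bq q r3 \<union> Neg ` Hq q r3))"
  unfolding hs_mk using assms by auto

lemma m1_1b: assumes "r2 \<in> R2s P q" "r4 \<in> R4s P q"
  shows "hs Y Y (mk_rule (hd r2) (Bq q r2 \<union> Neg ` Hq q r4 \<union> lnn ` body r4))"
  unfolding hs_mk
proof
  assume L: "\<forall>l\<in>Bq q r2 \<union> Neg ` Hq q r4 \<union> lnn ` body r4. lv Y Y l"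
  show "hd r2 \<inter> Y \<noteq> {}"
  proof (cases "q \<in> Y")
    case False
    have "Hq q r4 \<inter> Y \<noteq> {}" using C14[OF False] assms(2) L body_R4[OF assms(2)] by (simp add: ball_Un lnn_true)
    moreover have "Hq q r4 \<inter> Y = {}" using L by (auto simp add: ball_Un Neg_true)
    ultimately show ?thesis by simp
  next
    case True
    show ?thesis using C02h[OF True] assms(1) L by simp
  qed
qed

lemma m1_2b: assumes "r2 \<in> R2s P q" "r3 \<in> R3s P q" "r' \<in> R1s P q \<union> R4s P q"
  shows "hs Y Y (mk_rule (hd r2) (Bq q r2 \<union> Neg ` (Hq q r3 \<union> Hq q r') \<union> lnn ` (Bq q r3 \<union> Bq q r')))"
  unfolding hs_mk
proof
  assume L: "\<forall>l\<in>Bq q r2 \<union> Neg ` (Hq q r3 \<union> Hq q r') \<union> lnn ` (Bq q r3 \<union> Bq q r'). lv Y Y l"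
  show "hd r2 \<inter> Y \<noteq> {}"
  proof (cases "q \<in> Y")
    case False
    have "Hq q r' \<inter> Y \<noteq> {}" using C14[OF False] assms(3) L by (simp add: ball_Un lnn_true)
    moreover have "Hq q r' \<inter> Y = {}" using L by (auto simp add: ball_Un Neg_true)
    ultimately show ?thesis by simp
  next
    case True
    show ?thesis using C02h[OF True] assms(1) L by simp
  qed
qed

lemma m1_3b: assumes "h \<in> hd r2"
  shows "hs Y Y (mk_rule (hd r2) (Bq q r2 \<union> Neg ` Hq q r3 \<union> lnn ` (Bq q r3 \<union> {Pos h}) \<union> D))"
  unfolding hs_mk using assms by auto

lemma m1_4: assumes "r' \<in> R1s P q \<union> R4s P q" "D \<in> Dq q (R3s P q \<union> R4s P q)"
  shows "hs Y Y (mk_rule (Hq q r') (Bq q r' \<union> D))"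
  unfolding hs_mk
proof
  assume L: "\<forall>l\<in>Bq q r' \<union> D. lv Y Y l"
  show "Hq q r' \<inter> Y \<noteq> {}"
  proof (cases "q \<in> Y")
    case False
    show ?thesis using C14[OF False] assms(1) L by simp
  next
    case True
    have "\<forall>r\<in>R3s P q \<union> R4s P q. nsup Y q r"
    proof
      fix r assume "r \<in> R3s P q \<union> R4s P q"
      moreover have "\<forall>d\<in>D. lv Y Y d" using L by simp
      ultimately show "nsup Y q r" using Dq_true[OF assms(2)] by metis
    qed
    then show ?thesis using A3[OF True] by auto
  qed
qed

lemma m1_5: assumes "r' \<in> R1s P q \<union> R4s P q" "r \<in> R0s P q \<union> R2s P q"
  shows "hs Y Y (mk_rule (Hq q r') (Bq q r' \<union> Neg ` (hd r \<union> Hq q r3) \<union> lnn ` (Bq q r \<union> Bq q r3) \<union> D))"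
  unfolding hs_mk
proof
  assume L: "\<forall>l\<in>Bq q r' \<union> Neg ` (hd r \<union> Hq q r3) \<union> lnn ` (Bq q r \<union> Bq q r3) \<union> D. lv Y Y l"
  show "Hq q r' \<inter> Y \<noteq> {}"
  proof (cases "q \<in> Y")
    case False
    show ?thesis using C14[OF False] assms(1) L by simp
  next
    case True
    have "hd r \<inter> Y \<noteq> {}" using C02h[OF True] assms(2) L by (simp add: ball_Un lnn_true)
    moreover have "hd r \<inter> Y = {}" using L by (auto simp add: ball_Un Neg_true)
    ultimately show ?thesis by simp
  qed
qed

lemma m1_6: assumes "h \<in> Hq q r'"
  shows "hs Y Y (mk_rule (Hq q r') (Bq q r' \<union> Neg ` Hq q r3 \<union> lnn ` (Bq q r3 \<union> {Pos h}) \<union> D))"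
  unfolding hs_mk using assms by auto

lemma m1_7: assumes "h \<in> hd r0"
  shows "hs Y Y (mk_rule (hd r0 \<union> Hq q r3) (Bq q r0 \<union> Bq q r3 \<union> Neg ` Hq q r3' \<union> lnn ` (Bq q r3' \<union> {Pos h}) \<union> D))"
  unfolding hs_mk using assms by auto

lemma M1: "\<forall>\<rho>\<in>Ppp P q. hs Y Y \<rho>"
proof
  fix \<rho> assume "\<rho> \<in> Ppp P q"
  then show "hs Y Y \<rho>" unfolding Ppp_eq
    apply -
    apply (erule UnE)+
    subgoal by (rule m1_R)
    subgoal by (elim CollectE exE conjE; hypsubst; rule m1_1a; assumption)
    subgoal by (elim CollectE exE conjE; hypsubst; rule m1_2a; assumption)
    subgoal by (elim CollectE exE conjE; hypsubst; rule m1_3a; assumption)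
    subgoal by (elim CollectE exE conjE; hypsubst; rule m1_1b; assumption)
    subgoal by (elim CollectE exE conjE; hypsubst; rule m1_2b; assumption)
    subgoal by (elim CollectE exE conjE; hypsubst; rule m1_3b; assumption)
    subgoal by (elim CollectE exE conjE; hypsubst; rule m1_4; assumption)
    subgoal by (elim CollectE exE conjE; hypsubst; rule m1_5; assumption)
    subgoal by (elim CollectE exE conjE; hypsubst; rule m1_6; assumption)
    subgoal by (elim CollectE exE conjE; hypsubst; rule m1_7; assumption)
    done
qed

end

lemma hs_ins: "q \<notin> bp r \<Longrightarrow> hs X Y r \<Longrightarrow> hs (insert q X) Y r"
  unfolding hs_alt by auto

lemma Bq_ins: "\<forall>l\<in>Bq q r. lv (insert q X) Y l \<Longrightarrow> \<forall>l\<in>Bq q r. lv X Y l"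
  using lv_ins Bq_lat by metis

lemma body_Bq: "\<forall>l\<in>body r. lv X Y l \<Longrightarrow> \<forall>l\<in>Bq q r. lv X Y l"
  using Bq_sub[of q r] by auto

context ctx begin

lemma M2: assumes X: "X \<subseteq> Y - {q}" "X \<noteq> Y - {q}"
  and H: "\<forall>\<rho>\<in>Ppp P q. finite_rule \<rho> \<longrightarrow> hs X Y \<rho>" and HR: "\<forall>r\<in>R. hs X Y r"
  shows False
proof -
  have use: "Hs \<inter> X \<noteq> {}" if "mk_rule Hs L \<in> Ppp P q" "finite Hs" "finite L" "\<forall>l\<in>L. lv X Y l" for Hs L
  proof -
    have "finite_rule (mk_rule Hs L)" using that(2,3) by (rule fin_mk)
    then have "hs X Y (mk_rule Hs L)" using H that(1) by simp
    then show ?thesis using that(4) unfolding hs_mk by simp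
  qed
  have XY: "X \<subseteq> Y" using X by auto
  have qX: "q \<notin> X" using X by auto
  have BYm: "\<forall>l\<in>A. lv Y Y l" if "\<forall>l\<in>A. lv X Y l" for A using that lv_mono[OF XY] by auto
  have nfR: "r \<in> NF P" if "r \<in> R0s P q \<or> r \<in> R1s P q \<or> r \<in> R2s P q \<or> r \<in> R3s P q \<or> r \<in> R4s P q" for r
    using that R_sub[of P q] by auto
  have Rin: "hs X Y r" if "r \<in> Rs P q" for r
  proof -
    have "r \<in> NF P" using that R_sub(6)[of P q] by auto
    then have "finite_rule r" using NF_fin finr by auto
    then show ?thesis using H in_R[OF that] by simp
  qed
  show False
  proof (cases "q \<in> Y")
    case False
    have XY': "X \<subset> Y" using X False by auto
    have case14: "hs X Y r" if r14: "r \<in> R1s P q \<union> R4s P q" for r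
      unfolding hs_def
    proof
      assume B: "\<forall>l\<in>body r. lv X Y l"
      have rNF: "r \<in> NF P" using r14 nfR by auto
      have BX: "\<forall>l\<in>Bq q r. lv X Y l" using B by (rule body_Bq)
      have BY: "\<forall>l\<in>Bq q r. lv Y Y l" using BX BYm by auto
      have "Hq q r \<inter> Y \<noteq> {}" using C14[OF False r14 BY] .
      then obtain h where h: "h \<in> Hq q r" "h \<in> Y" by auto
      have "Hq q r \<inter> X \<noteq> {}"
      proof (cases "\<exists>r3\<in>R3s P q. \<not> nsup Y q r3")
        case True
        then obtain r3 where r3: "r3 \<in> R3s P q" "\<not> nsup Y q r3" by auto
        have r3NF: "r3 \<in> NF P" using r3 nfR by auto
        have r3b: "\<forall>l\<in>Bq q r3. lv Y Y l" "Hq q r3 \<inter> Y = {}" using not_nsup[OF r3(2)] by auto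
        have ns: "\<forall>r\<in>(R1s P q \<union> R4s P q) - {r}. nsup Y q r" using A1[OF False] by auto
        have fQ: "finite ((R1s P q \<union> R4s P q) - {r})" using finR by auto
        obtain D where D: "D \<in> Dq q ((R1s P q \<union> R4s P q) - {r})" "\<forall>d\<in>D. lv X Y d" "finite D"
          using Dq_ex[OF fQ ns, of X] by auto
        have "mk_rule (Hq q r) (Bq q r \<union> Neg ` Hq q r3 \<union> lnn ` (Bq q r3 \<union> {Pos h}) \<union> D) \<in> Ppp P q"
          by (rule in_6[OF r14 r3(1) h(1) D(1)])
        moreover have "finite (Hq q r)" using fins rNF by auto
        moreover have "finite (Bq q r \<union> Neg ` Hq q r3 \<union> lnn ` (Bq q r3 \<union> {Pos h}) \<union> D)"
          using fins[OF rNF] fins[OF r3NF] D(3) by auto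
        moreover have "\<forall>l\<in>Bq q r \<union> Neg ` Hq q r3 \<union> lnn ` (Bq q r3 \<union> {Pos h}) \<union> D. lv X Y l"
          using BX r3b h D(2) by (auto simp: ball_Un Neg_true lnn_true)
        ultimately show ?thesis by (rule use)
      next
        case False2: False
        have ns: "\<forall>s\<in>R3s P q \<union> R4s P q. nsup Y q s" using False2 A1[OF False] by auto
        have fQ: "finite (R3s P q \<union> R4s P q)" using finR by auto
        obtain D where D: "D \<in> Dq q (R3s P q \<union> R4s P q)" "\<forall>d\<in>D. lv X Y d" "finite D"
          using Dq_ex[OF fQ ns, of X] by auto
        have dis: "D \<inter> lnot ` Bq q r = {}"
        proof (rule ccontr)
          assume "D \<inter> lnot ` Bq q r \<noteq> {}"
          then obtain l where "l \<in> Bq q r" "lnot l \<in> D" by auto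
          then show False using D(2) BY by auto
        qed
        have "mk_rule (Hq q r) (Bq q r \<union> D) \<in> Ppp P q" by (rule in_4[OF r14 D(1) dis])
        moreover have "finite (Hq q r)" using fins rNF by auto
        moreover have "finite (Bq q r \<union> D)" using fins[OF rNF] D(3) by auto
        moreover have "\<forall>l\<in>Bq q r \<union> D. lv X Y l" using BX D(2) by auto
        ultimately show ?thesis by (rule use)
      qed
      then show "hd r \<inter> X \<noteq> {}" using Hq_sub[of q r] by auto
    qed
    have "\<forall>r\<in>NF P. hs X Y r"
    proof
      fix r assume r: "r \<in> NF P"
      consider (R) "r \<in> Rs P q" | (R0) "r \<in> R0s P q" | (R1) "r \<in> R1s P q" | (R2) "r \<in> R2s P q"
        | (R3) "r \<in> R3s P q" | (R4) "r \<in> R4s P q" using R_cases[OF r, of q] by auto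
      then show "hs X Y r"
      proof cases
        case R then show ?thesis by (rule Rin)
      next
        case R0 then show ?thesis using R_facts(2)[of r P q] qX unfolding hs_alt by auto
      next
        case R1 then show ?thesis using case14 by auto
      next
        case R2 then show ?thesis using R_facts(4)[of r P q] False unfolding hs_alt by auto
      next
        case R3 then show ?thesis using R_facts(5)[of r P q] False unfolding hs_alt by auto
      next
        case R4 then show ?thesis using case14 by auto
      qed
    qed
    then show False using minP' XY' HR by auto
  next
    case True
    obtain s where s: "s \<in> R3s P q \<union> R4s P q" "\<not> nsup Y q s" using A3[OF True] by auto
    have sNF: "s \<in> NF P" using s(1) nfR by auto
    have sb: "\<forall>l\<in>Bq q s. lv Y Y l" "Hq q s \<inter> Y = {}" using not_nsup[OF s(2)] by auto
    have Dex: "\<exists>D\<in>Dq q ((R0s P q \<union> R2s P q) - {r}). (\<forall>d\<in>D. lv X Y d) \<and> finite D" for r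
    proof -
      have ns: "\<forall>r\<in>(R0s P q \<union> R2s P q) - {r}. nsup Y q r" using A2[OF True] by auto
      have fQ: "finite ((R0s P q \<union> R2s P q) - {r})" using finR by auto
      show ?thesis using Dq_ex[OF fQ ns, of X] .
    qed
    have S1: "hd r \<inter> X \<noteq> {}" if r2: "r \<in> R2s P q" and BX: "\<forall>l\<in>Bq q r. lv X Y l" for r
    proof -
      have rNF: "r \<in> NF P" using r2 nfR by auto
      have BY: "\<forall>l\<in>Bq q r. lv Y Y l" using BX BYm by auto
      have "hd r \<inter> Y \<noteq> {}" using C02h[OF True _ BY] r2 by auto
      then obtain h where h: "h \<in> hd r" "h \<in> Y" by auto
      from s(1) consider (s4) "s \<in> R4s P q" | (s3) "s \<in> R3s P q" by auto
      then show ?thesis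
      proof cases
        case s4
        have "mk_rule (hd r) (Bq q r \<union> Neg ` Hq q s \<union> lnn ` body s) \<in> Ppp P q" by (rule in_1b[OF r2 s4])
        moreover have "finite (hd r)" using fins rNF by auto
        moreover have "finite (Bq q r \<union> Neg ` Hq q s \<union> lnn ` body s)" using fins[OF rNF] fins[OF sNF] by auto
        moreover have "\<forall>l\<in>Bq q r \<union> Neg ` Hq q s \<union> lnn ` body s. lv X Y l"
          using BX sb body_R4[OF s4] by (auto simp: ball_Un Neg_true lnn_true)
        ultimately show ?thesis by (rule use)
      next
        case s3
        obtain D where D: "D \<in> Dq q ((R0s P q \<union> R2s P q) - {r})" "\<forall>d\<in>D. lv X Y d" "finite D"
          using Dex[of r] by auto
        have "mk_rule (hd r) (Bq q r \<union> Neg ` Hq q s \<union> lnn ` (Bq q s \<union> {Pos h}) \<union> D) \<in> Ppp P q"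
          by (rule in_3b[OF r2 s3 h(1) D(1)])
        moreover have "finite (hd r)" using fins rNF by auto
        moreover have "finite (Bq q r \<union> Neg ` Hq q s \<union> lnn ` (Bq q s \<union> {Pos h}) \<union> D)"
          using fins[OF rNF] fins[OF sNF] D(3) by auto
        moreover have "\<forall>l\<in>Bq q r \<union> Neg ` Hq q s \<union> lnn ` (Bq q s \<union> {Pos h}) \<union> D. lv X Y l"
          using BX sb h D(2) by (auto simp: ball_Un Neg_true lnn_true)
        ultimately show ?thesis by (rule use)
      qed
    qed
    show False
    proof (cases "\<forall>r0\<in>R0s P q. (\<forall>l\<in>Bq q r0. lv X Y l) \<longrightarrow> hd r0 \<inter> X \<noteq> {}")
      case allR0: True
      have sub: "insert q X \<subset> Y" using X True by auto
      have "\<forall>r\<in>NF P. hs (insert q X) Y r"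
      proof
        fix r assume r: "r \<in> NF P"
        show "hs (insert q X) Y r"
        proof (cases "q \<in> hd r")
          case True then show ?thesis unfolding hs_alt by auto
        next
          case qh: False
          consider (R) "r \<in> Rs P q" | (R0) "r \<in> R0s P q" | (R1) "r \<in> R1s P q" | (R2) "r \<in> R2s P q"
            | (R3) "r \<in> R3s P q" | (R4) "r \<in> R4s P q" using R_cases[OF r, of q] by auto
          then show ?thesis
          proof cases
            case R then show ?thesis using Rin[OF R] hs_ins R_facts(1)[of r P q] atoms_rule_q by metis
          next
            case R0 show ?thesis unfolding hs_def
            proof
              assume "\<forall>l\<in>body r. lv (insert q X) Y l"
              then have "\<forall>l\<in>Bq q r. lv X Y l" using body_Bq Bq_ins by metis
              then have "hd r \<inter> X \<noteq> {}" using allR0 R0 by auto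
              then show "hd r \<inter> insert q X \<noteq> {}" by auto
            qed
          next
            case R1 then show ?thesis using R_facts(3)[of r P q] True unfolding hs_alt by auto
          next
            case R2 show ?thesis unfolding hs_def
            proof
              assume "\<forall>l\<in>body r. lv (insert q X) Y l"
              then have "\<forall>l\<in>Bq q r. lv X Y l" using body_Bq Bq_ins by metis
              then have "hd r \<inter> X \<noteq> {}" using S1 R2 by auto
              then show "hd r \<inter> insert q X \<noteq> {}" by auto
            qed
          next
            case R3 then show ?thesis using R_facts(5)[of r P q] qh by auto
          next
            case R4 then show ?thesis using R_facts(6)[of r P q] qh by auto
          qed
        qed
      qed
      moreover have "\<forall>r\<in>R. hs (insert q X) Y r"
        using HR Rq hs_ins atoms_rule_q by metis
      ultimately show False using minP' sub by auto
    next
      case False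
      then obtain r0 where r0: "r0 \<in> R0s P q" "\<forall>l\<in>Bq q r0. lv X Y l" "hd r0 \<inter> X = {}" by auto
      have r0NF: "r0 \<in> NF P" using r0(1) nfR by auto
      have BY0: "\<forall>l\<in>Bq q r0. lv Y Y l" using r0(2) BYm by auto
      have "hd r0 \<inter> Y \<noteq> {}" using C02h[OF True _ BY0] r0(1) by auto
      then obtain h0 where h0: "h0 \<in> hd r0" "h0 \<in> Y" by auto
      obtain D0 where D0: "D0 \<in> Dq q ((R0s P q \<union> R2s P q) - {r0})" "\<forall>d\<in>D0. lv X Y d" "finite D0"
        using Dex[of r0] by auto
      have XY': "X \<subset> Y" using X True by auto
      have case34: "hs X Y r" if r34: "r \<in> R3s P q \<union> R4s P q" for r
        unfolding hs_def
      proof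
        assume B: "\<forall>l\<in>body r. lv X Y l"
        have rNF: "r \<in> NF P" using r34 nfR by auto
        have BX: "\<forall>l\<in>Bq q r. lv X Y l" using B by (rule body_Bq)
        show "hd r \<inter> X \<noteq> {}"
        proof (rule ccontr)
          assume "\<not> hd r \<inter> X \<noteq> {}"
          then have HX: "Hq q r \<inter> X = {}" using Hq_sub[of q r] by auto
          from r34 consider (r4) "r \<in> R4s P q" | (r3) "r \<in> R3s P q" by auto
          then show False
          proof cases
            case r4
            have "mk_rule (hd r0 \<union> Hq q r) (Bq q r0 \<union> body r) \<in> Ppp P q" by (rule in_1a[OF r0(1) r4])
            moreover have "finite (hd r0 \<union> Hq q r)" using fins[OF r0NF] fins[OF rNF] by auto
            moreover have "finite (Bq q r0 \<union> body r)" using fins[OF r0NF] fins[OF rNF] by auto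
            moreover have "\<forall>l\<in>Bq q r0 \<union> body r. lv X Y l" using r0(2) B by auto
            ultimately have "(hd r0 \<union> Hq q r) \<inter> X \<noteq> {}" by (rule use)
            then show False using r0(3) HX by auto
          next
            case r3
            show False
            proof (cases "Hq q r \<inter> Y = {}")
              case True
              have "mk_rule (hd r0) (Bq q r0 \<union> {NegNeg h0} \<union> D0 \<union> Bq q r \<union> Neg ` Hq q r) \<in> Ppp P q"
                by (rule in_3a[OF r0(1) r3 h0(1) D0(1)])
              moreover have "finite (hd r0)" using fins[OF r0NF] by auto
              moreover have "finite (Bq q r0 \<union> {NegNeg h0} \<union> D0 \<union> Bq q r \<union> Neg ` Hq q r)"
                using fins[OF r0NF] fins[OF rNF] D0(3) by auto
              moreover have "\<forall>l\<in>Bq q r0 \<union> {NegNeg h0} \<union> D0 \<union> Bq q r \<union> Neg ` Hq q r. lv X Y l"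
                using r0(2) h0 D0(2) BX True by (auto simp: ball_Un Neg_true)
              ultimately have "hd r0 \<inter> X \<noteq> {}" by (rule use)
              then show False using r0(3) by auto
            next
              case False
              from s(1) consider (s4) "s \<in> R4s P q" | (s3) "s \<in> R3s P q" by auto
              then show False
              proof cases
                case s4
                have "mk_rule (hd r0 \<union> Hq q r) (Bq q r0 \<union> Bq q r \<union> Neg ` Hq q s \<union> lnn ` Bq q s) \<in> Ppp P q"
                  using in_2a[OF r0(1) r3, of s] s4 by auto
                moreover have "finite (hd r0 \<union> Hq q r)" using fins[OF r0NF] fins[OF rNF] by auto
                moreover have "finite (Bq q r0 \<union> Bq q r \<union> Neg ` Hq q s \<union> lnn ` Bq q s)"
                  using fins[OF r0NF] fins[OF rNF] fins[OF sNF] by auto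
                moreover have "\<forall>l\<in>Bq q r0 \<union> Bq q r \<union> Neg ` Hq q s \<union> lnn ` Bq q s. lv X Y l"
                  using r0(2) BX sb by (auto simp: ball_Un Neg_true lnn_true)
                ultimately have "(hd r0 \<union> Hq q r) \<inter> X \<noteq> {}" by (rule use)
                then show False using r0(3) HX by auto
              next
                case s3
                have ne: "r \<noteq> s" using False sb(2) by auto
                have "mk_rule (hd r0 \<union> Hq q r) (Bq q r0 \<union> Bq q r \<union> Neg ` Hq q s \<union> lnn ` (Bq q s \<union> {Pos h0}) \<union> D0) \<in> Ppp P q"
                  by (rule in_7[OF r0(1) r3 s3 ne D0(1) h0(1)])
                moreover have "finite (hd r0 \<union> Hq q r)" using fins[OF r0NF] fins[OF rNF] by auto
                moreover have "finite (Bq q r0 \<union> Bq q r \<union> Neg ` Hq q s \<union> lnn ` (Bq q s \<union> {Pos h0}) \<union> D0)"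
                  using fins[OF r0NF] fins[OF rNF] fins[OF sNF] D0(3) by auto
                moreover have "\<forall>l\<in>Bq q r0 \<union> Bq q r \<union> Neg ` Hq q s \<union> lnn ` (Bq q s \<union> {Pos h0}) \<union> D0. lv X Y l"
                  using r0(2) BX sb h0 D0(2) by (auto simp: ball_Un Neg_true lnn_true)
                ultimately have "(hd r0 \<union> Hq q r) \<inter> X \<noteq> {}" by (rule use)
                then show False using r0(3) HX by auto
              qed
            qed
          qed
        qed
      qed
      have "\<forall>r\<in>NF P. hs X Y r"
      proof
        fix r assume r: "r \<in> NF P"
        consider (R) "r \<in> Rs P q" | (R0) "r \<in> R0s P q" | (R1) "r \<in> R1s P q" | (R2) "r \<in> R2s P q"
          | (R3) "r \<in> R3s P q" | (R4) "r \<in> R4s P q" using R_cases[OF r, of q] by auto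
        then show "hs X Y r"
        proof cases
          case R then show ?thesis by (rule Rin)
        next
          case R0 then show ?thesis using R_facts(2)[of r P q] qX unfolding hs_alt by auto
        next
          case R1 then show ?thesis using R_facts(3)[of r P q] True unfolding hs_alt by auto
        next
          case R2 show ?thesis unfolding hs_def
          proof
            assume "\<forall>l\<in>body r. lv X Y l"
            then have "\<forall>l\<in>Bq q r. lv X Y l" by (rule body_Bq)
            then show "hd r \<inter> X \<noteq> {}" using S1 R2 by auto
          qed
        next
          case R3 then show ?thesis using case34 by auto
        next
          case R4 then show ?thesis using case34 by auto
        qed
      qed
      then show False using minP' XY' HR by auto
    qed
  qed
qed

end

lemma hs_drop_atom: "a \<notin> atoms_rule r \<Longrightarrow> hs Y Y r \<Longrightarrow> hs (Y - {a}) Y r"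
  unfolding hs_alt atoms_rule_def by auto

theorem theorem3:
  fixes P R :: "'a rule set" and \<Sigma> :: "'a set" and q :: 'a
  assumes "finite P" and "\<forall>r\<in>P. finite_rule r" and "atoms P \<subseteq> \<Sigma>"
      and "q \<in> \<Sigma>"
      and "finite R" and "\<forall>r\<in>R. finite_rule r" and "atoms R \<subseteq> \<Sigma> - {q}"
  shows "(\<lambda>Y. Y - {q}) ` AS (P \<union> R) \<subseteq> AS (fSP P q \<union> R)"
proof
  fix Y' assume "Y' \<in> (\<lambda>Y. Y - {q}) ` AS (P \<union> R)"
  then obtain Y where Y: "Y \<in> AS (P \<union> R)" and Y'd: "Y' = Y - {q}" by auto
  have HTY: "(Y, Y) \<in> HT (P \<union> R)" and nomin: "\<not> (\<exists>X. X \<subset> Y \<and> (X, Y) \<in> HT (P \<union> R))"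
    using Y unfolding AS_def by auto
  have Yat: "Y \<subseteq> atoms (P \<union> R)" and satY: "sat Y (P \<union> R)" using HTY unfolding HT_def by auto
  have Ymod: "\<forall>r\<in>P \<union> R. hs Y Y r" using satY unfolding sat_hs by auto
  have Ymin: False if "X \<subset> Y" "\<forall>r\<in>P \<union> R. hs X Y r" for X
  proof -
    have "(X, Y) \<in> HT (P \<union> R)" unfolding HT_def sat_reduct using that Yat satY by auto
    then show False using nomin that(1) by auto
  qed
  have Rq: "\<forall>r\<in>R. q \<notin> atoms_rule r" using assms(7) unfolding atoms_def by auto
  interpret ctx P R Y q
    using assms(1,2) Rq Ymod Ymin by unfold_locales auto
  have qf: "q \<notin> atoms_rule \<rho>" if "\<rho> \<in> Ppp P q" for \<rho> using Ppp_qfree that .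
  have Pm: "\<forall>\<rho>\<in>Ppp P q. hs Y' Y' \<rho>"
  proof
    fix \<rho> assume r: "\<rho> \<in> Ppp P q"
    have "hs Y Y \<rho>" using M1 r by auto
    then show "hs Y' Y' \<rho>" using hs_noq(2)[OF qf[OF r]] Y'd by auto
  qed
  have Fm: "\<forall>r\<in>fSP P q. hs Y' Y' r" unfolding fSP_eq using NF_fwd[OF _ Pm] by auto
  have Rm: "\<forall>r\<in>R. hs Y' Y' r"
  proof
    fix r assume r: "r \<in> R"
    have "hs Y Y r" using Ymod r by auto
    then show "hs Y' Y' r" using hs_noq(2)[of q r] Rq r Y'd by auto
  qed
  have FRm: "\<forall>r\<in>fSP P q \<union> R. hs Y' Y' r" using Fm Rm by auto
  have min: False if "X \<subset> Y'" "\<forall>r\<in>fSP P q \<union> R. hs X Y' r" for X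
  proof -
    have XY: "X \<subseteq> Y'" using that(1) by auto
    have "\<forall>\<rho>\<in>Ppp P q. finite_rule \<rho> \<longrightarrow> hs X Y \<rho>"
    proof (intro ballI impI)
      fix \<rho> assume r: "\<rho> \<in> Ppp P q" "finite_rule \<rho>"
      have "\<forall>r\<in>NF (Ppp P q). hs X Y' r" using that(2) unfolding fSP_eq by auto
      then have "hs X Y' \<rho>" using NF_bwd[OF XY r(1) r(2)] by auto
      then show "hs X Y \<rho>" using hs_noq(1)[OF qf[OF r(1)]] Y'd by auto
    qed
    moreover have "\<forall>r\<in>R. hs X Y r"
    proof
      fix r assume r: "r \<in> R"
      have "hs X Y' r" using that(2) r by auto
      then show "hs X Y r" using hs_noq(1)[of q r] Rq r Y'd by auto
    qed
    ultimately show False using M2[of X] that(1) Y'd by auto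
  qed
  have at: "Y' \<subseteq> atoms (fSP P q \<union> R)"
  proof
    fix a assume a: "a \<in> Y'"
    show "a \<in> atoms (fSP P q \<union> R)"
    proof (rule ccontr)
      assume na: "a \<notin> atoms (fSP P q \<union> R)"
      have "\<forall>r\<in>fSP P q \<union> R. hs (Y' - {a}) Y' r"
      proof
        fix r assume r: "r \<in> fSP P q \<union> R"
        then have "a \<notin> atoms_rule r" using na unfolding atoms_def by auto
        moreover have "hs Y' Y' r" using FRm r by auto
        ultimately show "hs (Y' - {a}) Y' r" by (rule hs_drop_atom)
      qed
      then show False using min[of "Y' - {a}"] a by auto
    qed
  qed
  have "(Y', Y') \<in> HT (fSP P q \<union> R)"
  proof -
    have "sat Y' (fSP P q \<union> R)" using FRm by (simp add: sat_hs)
    moreover have "sat Y' (reduct (fSP P q \<union> R) Y')" using FRm by (simp add: sat_reduct)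
    ultimately show ?thesis unfolding HT_def using at by auto
  qed
  moreover have "\<not> (\<exists>X. X \<subset> Y' \<and> (X, Y') \<in> HT (fSP P q \<union> R))"
  proof
    assume "\<exists>X. X \<subset> Y' \<and> (X, Y') \<in> HT (fSP P q \<union> R)"
    then obtain X where X: "X \<subset> Y'" "(X, Y') \<in> HT (fSP P q \<union> R)" by auto
    then have "sat X (reduct (fSP P q \<union> R) Y')" unfolding HT_def by auto
    then have "\<forall>r\<in>fSP P q \<union> R. hs X Y' r" by (simp add: sat_reduct)
    then show False using min X(1) by auto
  qed
  ultimately show "Y' \<in> AS (fSP P q \<union> R)" unfolding AS_def by auto
qed

end
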